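(* Let $\mathcal{C}$ be an $[n,k]_q$ code such that for every $c\in\mathcal{C}\setminus\{0\}$ the entries of $V(c)$ are pairwise distinct. Then there exists a non-zero $r=(r_1,\dots,r_{q-1})\in\mathbb{N}^{q-1}$ such that for every $c\in\mathcal{C}\setminus\{0\}$: $$\sum_{j=1}^{q-1} r_j\left(c[\alpha^{i-j}]-c[\alpha^{\ell-j}]\right)\neq 0\ \text{ for all } 1\le i<\ell\le q-1,\quad\text{and}\quad \sum_{j=1}^{q-1} r_j\left(c[\alpha^{\ell-j}]-c[0]\right)\neq 0\ \text{ for all } 1\le \ell\le q-1.$$
   Context: $\alpha$ is a fixed primitive element of $\mathbb{F}_q$ (exponents modulo $q-1$), $\mathbb{N}=\{0,1,2,\dots\}$. An $[n,k]_q$ code is a $k$-dimensional subspace of $\mathbb{F}_q^n$. For $c\in\mathbb{F}_q^n$, $\beta\in\mathbb{F}_q$, $c[\beta]=|\{l:c_l=\beta\}|$ and $V(c)=(c[\alpha],\dots,c[\alpha^{q-1}],c[0])$. *)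

theory Defs
  imports "HOL-Analysis.Analysis"
begin

definition primitive_elem :: "'a::{field,finite} \<Rightarrow> bool" where
  "primitive_elem a \<longleftrightarrow> a \<noteq> 0 \<and> (\<forall>x. x \<noteq> 0 \<longrightarrow> (\<exists>i::nat. x = a ^ i))"

definition apow :: "'a::{field,finite} \<Rightarrow> int \<Rightarrow> 'a" where
  "apow a e = a ^ nat (e mod int (CARD('a) - 1))"

text \<open>c[beta]: number of coordinates of c equal to beta.\<close>
definition wcount :: "'a ^ 'n \<Rightarrow> 'a \<Rightarrow> nat" where
  "wcount c b = card {l. c $ l = b}"

text \<open>V(c), indexed 1..q: entry j (j \<le> q-1) is c[alpha^j], entry q is c[0].\<close>
definition Vvec :: "'a::{field,finite} \<Rightarrow> 'a ^ 'n \<Rightarrow> nat \<Rightarrow> nat" where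
  "Vvec a c j = (if j \<le> CARD('a) - 1 then wcount c (apow a (int j)) else wcount c 0)"

definition is_code :: "('a::{field,finite} ^ 'n) set \<Rightarrow> nat \<Rightarrow> bool" where
  "is_code C k \<longleftrightarrow> vec.subspace C \<and> vec.dim C = k"

end

theory Submission
  imports Defs
begin

lemma card_ge2: "CARD('a::{field,finite}) \<ge> 2"
proof -
  have "{0::'a, 1} \<subseteq> UNIV" by simp
  hence "card {0::'a,1} \<le> CARD('a)" by (intro card_mono) auto
  thus ?thesis by simp
qed

lemma key:
  fixes \<alpha> :: "'a::{field,finite}" and c :: "'a ^ 'n"
  assumes "1 \<le> i" "i \<le> CARD('a) - 1"
  shows "wcount c (apow \<alpha> (int i - 1)) =
         Vvec \<alpha> c (if i = 1 then CARD('a) - 1 else i - 1)"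
proof (cases "i = 1")
  case True
  have "apow \<alpha> (int i - 1) = apow \<alpha> (int (CARD('a) - 1))"
    using True by (simp add: apow_def)
  thus ?thesis using True by (simp add: Vvec_def)
next
  case False
  have "apow \<alpha> (int i - 1) = apow \<alpha> (int (i - 1))"
    using False assms by (simp add: of_nat_diff)
  moreover have "i - 1 \<le> CARD('a) - 1" using assms by simp
  ultimately show ?thesis using False unfolding Vvec_def by simp
qed

theorem mainTheorem8:
  fixes \<alpha> :: "'a::{field,finite}" and C :: "('a ^ 'n) set" and k :: nat
  assumes prim: "primitive_elem \<alpha>"
    and code: "is_code C k"
    and dist: "\<forall>c \<in> C - {0}. inj_on (Vvec \<alpha> c) {1..CARD('a)}"
  shows "\<exists>r :: nat \<Rightarrow> nat. (\<exists>j \<in> {1..CARD('a) - 1}. r j \<noteq> 0) \<and>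
     (\<forall>c \<in> C - {0}.
        (\<forall>i l. 1 \<le> i \<and> i < l \<and> l \<le> CARD('a) - 1 \<longrightarrow>
           (\<Sum>j = 1..CARD('a) - 1. int (r j) *
              (int (wcount c (apow \<alpha> (int i - int j))) - int (wcount c (apow \<alpha> (int l - int j))))) \<noteq> 0) \<and>
        (\<forall>l. 1 \<le> l \<and> l \<le> CARD('a) - 1 \<longrightarrow>
           (\<Sum>j = 1..CARD('a) - 1. int (r j) *
              (int (wcount c (apow \<alpha> (int l - int j))) - int (wcount c 0))) \<noteq> 0))"
proof -
  define Q where "Q = CARD('a)"
  have Q2: "Q \<ge> 2" using card_ge2[where 'a='a] Q_def by simp
  define r :: "nat \<Rightarrow> nat" where "r = (\<lambda>j. if j = 1 then 1 else 0)"
  have sumr: "(\<Sum>j = 1..Q - 1. int (r j) * f j) = f 1" for f :: "nat \<Rightarrow> int"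
  proof -
    have "(\<Sum>j = 1..Q - 1. int (r j) * f j) = (\<Sum>j \<in> {1..Q - 1}. if j = 1 then f 1 else 0)"
      by (rule sum.cong) (auto simp: r_def)
    also have "\<dots> = f 1" using Q2 by (simp add: sum.delta)
    finally show ?thesis .
  qed
  define m where "m = (\<lambda>i::nat. if i = 1 then Q - 1 else i - 1)"
  show ?thesis unfolding Q_def[symmetric]
  proof (intro exI[of _ r] conjI ballI allI impI)
    show "\<exists>j\<in>{1..Q - 1}. r j \<noteq> 0" using Q2 by (intro bexI[of _ 1]) (auto simp: r_def)
  next
    fix c i l assume c: "c \<in> C - {0}" and il: "1 \<le> i \<and> i < l \<and> l \<le> Q - 1"
    have inj: "inj_on (Vvec \<alpha> c) {1..Q}" using dist c Q_def by simp
    have e1: "wcount c (apow \<alpha> (int i - 1)) = Vvec \<alpha> c (m i)"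
      using key[where i=i and \<alpha>=\<alpha> and c=c] il Q_def m_def by simp
    have e2: "wcount c (apow \<alpha> (int l - 1)) = Vvec \<alpha> c (m l)"
      using key[where i=l and \<alpha>=\<alpha> and c=c] il Q_def m_def by simp
    have "m i \<noteq> m l" using il Q2 unfolding m_def by auto
    moreover have "m i \<in> {1..Q}" "m l \<in> {1..Q}" using il Q2 unfolding m_def by auto
    ultimately have "Vvec \<alpha> c (m i) \<noteq> Vvec \<alpha> c (m l)" using inj by (meson inj_on_eq_iff)
    thus "(\<Sum>j = 1..Q - 1. int (r j) *
              (int (wcount c (apow \<alpha> (int i - int j))) - int (wcount c (apow \<alpha> (int l - int j))))) \<noteq> 0"
      unfolding sumr using e1 e2 by simp
  next
    fix c l assume c: "c \<in> C - {0}" and il: "1 \<le> l \<and> l \<le> Q - 1"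
    have inj: "inj_on (Vvec \<alpha> c) {1..Q}" using dist c Q_def by simp
    have e2: "wcount c (apow \<alpha> (int l - 1)) = Vvec \<alpha> c (m l)"
      using key[where i=l and \<alpha>=\<alpha> and c=c] il Q_def m_def by simp
    have "\<not> Q \<le> CARD('a) - 1" using Q2 Q_def by simp
    hence e0: "wcount c 0 = Vvec \<alpha> c Q" unfolding Vvec_def by simp
    have "m l \<noteq> Q" using il Q2 unfolding m_def by auto
    moreover have "m l \<in> {1..Q}" "Q \<in> {1..Q}" using il Q2 unfolding m_def by auto
    ultimately have "Vvec \<alpha> c (m l) \<noteq> Vvec \<alpha> c Q" using inj by (meson inj_on_eq_iff)
    thus "(\<Sum>j = 1..Q - 1. int (r j) *
              (int (wcount c (apow \<alpha> (int l - int j))) - int (wcount c 0))) \<noteq> 0"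
      unfolding sumr using e2 e0 by simp
  qed
qed

end
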